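(* For any program $\Omega$ with weight constraints, the map $Z\mapsto Z\setminus Q_\Omega$ is a one-to-one correspondence between the answer sets of the nonnested translation $[\Omega]^{nn}$ and the answer sets of $\Omega$, where $Q_\Omega$ is the set of all new atoms (negation atoms and weight atoms) occurring in $[\Omega]^{nn}$.
   Context: Programs with nested expressions. A literal is a propositional atom $a$ or its classical negation $\neg a$; a set of literals is consistent if it contains no pair $a,\neg a$. Elementary formulas are literals, $\bot$ and $\top$. Formulas are built from elementary formulas using the unary connective $\mathit{not}$ (negation as failure) and the binary connectives "," (conjunction) and ";" (disjunction). A rule with nested expressions has the form $\mathit{Head}\leftarrow \mathit{Body}$ where $\mathit{Head},\mathit{Body}$ are formulas (a formula $F$ alone stands for $F\leftarrow\top$); a program with nested expressions is a set of such rules. For a consistent set $Z$ of literals: $Z\models l$ iff $l\in Z$ for a literal $l$; $Z\models\top$; $Z\not\models\bot$; $Z\models(F,G)$ iff $Z\models F$ and $Z\models G$; $Z\models(F;G)$ iff $Z\models F$ or $Z\models G$; $Z\models \mathit{not}\,F$ iff $Z\not\models F$. $Z$ satisfies a program if for every rule, $Z\models\mathit{Body}$ implies $Z\models\mathit{Head}$. The reduct $F^Z$: $F^Z=F$ for elementary $F$; $(F,G)^Z=F^Z,G^Z$; $(F;G)^Z=F^Z;G^Z$; $(\mathit{not}\,F)^Z=\bot$ if $Z\models F$ and $\top$ otherwise. $\Pi^Z$ is the set of rules $\mathit{Head}^Z\leftarrow\mathit{Body}^Z$ for the rules of $\Pi$. A consistent set $Z$ is an answer set of a program without $\mathit{not}$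 if it is a minimal (under inclusion) consistent set of literals satisfying it; $Z$ is an answer set of an arbitrary program $\Pi$ if $Z$ is an answer set of $\Pi^Z$. A nonnested rule is one whose head is a literal or $\bot$ and whose body is a conjunction of literals, each possibly prefixed with $\mathit{not}$. Programs with weight constraints. A rule element is a literal $l$ (positive) or $\mathit{not}\ l$ (negative); $Z\models c$ for a rule element is as for formulas. A weight constraint is $L\le\{c_1=w_1,\dots,c_m=w_m\}\le U$ where $L,U$ are real numbers or $\pm\infty$, $c_1,\dots,c_m$ ($m\ge0$) are rule elements and $w_1,\dots,w_m$ are nonnegative reals. A rule with weight constraints is $C_0\leftarrow C_1,\dots,C_n$ ($n\ge0$) with weight constraints $C_i$; the rule elements of $C_0$ are its head elements. A program with weight constraints is a set of such rules. A literal $c$ is identified with the constraint $1\le\{c=1\}$. A consistent set $Z$ of literals satisfies the weight constraint above if $L\le\sum_{j:Z\models c_j}w_j\le U$, and satisfies a program $\Omega$ if for every rule, whenever $Z$ satisfies $C_1,\dots,C_n$ it satisfies $C_0$. The reduct $(L\le S)^Z$ is $L^Z\le S'$ where $S'$ is obtained from $S$ by dropping all pairs $c=w$ with $c$ negative, and $L^Z$ is $L$ minus the sum of the weights $w$ of the pairs $c=w$ in $S$ with $c$ negative and $Z\models c$. The reduct of a rule $L_0\le S_0\le U_0\leftarrow L_1\le S_1\le U_1,\dots,L_n\le S_n\le U_n$ w.r.t. $Z$ is, if $Z\models S_i\le U_i$ for all $1\le i\le n$, the set of rules $l\leftarrow (L_1\le S_1)^Z,\dots,(L_n\le S_n)^Z$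 for all positive head elements $l$ with $Z\models l$; otherwise it is empty. $\Omega^Z$ is the union of the reducts of the rules of $\Omega$; it has a unique minimal satisfying set of literals, $\mathit{cl}(\Omega^Z)$. $Z$ is an answer set of $\Omega$ if $Z\models\Omega$ and $\mathit{cl}(\Omega^Z)=Z$. Nonnested translation. For each literal $l$ there is a new atom $q_{\mathit{not}\,l}$ (negation atom), and for each real $w$ (or $\pm\infty$) and each expression $S=\{c_1=w_1,\dots,c_m=w_m\}$ there are new atoms $q_{w\le S}$ and $q_{w<S}$ (weight atoms); all new atoms are distinct and do not occur in $\Omega$. For $m>0$, $S'$ denotes $\{c_1=w_1,\dots,c_{m-1}=w_{m-1}\}$. A nonnested program $\Pi$ is closed if: for each atom $q_{w\le S}$ occurring in $\Pi$, $\Pi$ contains the rule $q_{w\le S}$ (i.e. $q_{w\le S}\leftarrow\top$) if $w\le0$, and the rules $q_{w\le S}\leftarrow q_{w\le S'}$ and $q_{w\le S}\leftarrow c_m,q_{w-w_m\le S'}$ if $0<w\le w_1+\dots+w_m$; and for each atom $q_{w<S}$ occurring in $\Pi$, $\Pi$ contains the rule $q_{w<S}$ if $w<0$, and the rules $q_{w<S}\leftarrow q_{w<S'}$ and $q_{w<S}\leftarrow c_m,q_{w-w_m<S'}$ if $0\le w<w_1+\dots+w_m$. For a weight constraint, $[L\le S\le U]^{nn}$ is the conjunction $q_{L\le S},\mathit{not}\,q_{U<S}$. $[\Omega]^{nn}$ is the smallest closed program containing, for every rule $L_0\le S_0\le U_0\leftarrow C_1,\dots,C_n$ of $\Omega$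 and each of its positive head elements $l$, the rules $q_{\mathit{not}\,l}\leftarrow\mathit{not}\,l$ and $l\leftarrow\mathit{not}\,q_{\mathit{not}\,l},[C_1]^{nn},\dots,[C_n]^{nn}$, together with the rules $\bot\leftarrow\mathit{not}\,q_{L_0\le S_0},[C_1]^{nn},\dots,[C_n]^{nn}$ and $\bot\leftarrow q_{U_0<S_0},[C_1]^{nn},\dots,[C_n]^{nn}$. *)

theory Defs
  imports Complex_Main "HOL-Library.Extended_Real"
begin

datatype 'a lit = Pos 'a | Neg 'a   \<comment> \<open>atom a, classical negation \<not>a\<close>

definition consistent :: "'a lit set \<Rightarrow> bool" where
  "consistent Z \<longleftrightarrow> (\<forall>a. \<not> (Pos a \<in> Z \<and> Neg a \<in> Z))"

fun lit_atom :: "'a lit \<Rightarrow> 'a" where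
  "lit_atom (Pos a) = a" | "lit_atom (Neg a) = a"

datatype 'a form = FLit "'a lit" | FBot | FTop | FNot "'a form"
  | FAnd "'a form" "'a form" | FOr "'a form" "'a form"

type_synonym 'a nrule = "'a form \<times> 'a form"   \<comment> \<open>(Head, Body)\<close>

fun fsat :: "'a lit set \<Rightarrow> 'a form \<Rightarrow> bool" where
  "fsat Z (FLit l) = (l \<in> Z)"
| "fsat Z FBot = False"
| "fsat Z FTop = True"
| "fsat Z (FNot F) = (\<not> fsat Z F)"
| "fsat Z (FAnd F G) = (fsat Z F \<and> fsat Z G)"
| "fsat Z (FOr F G) = (fsat Z F \<or> fsat Z G)"

definition psat :: "'a lit set \<Rightarrow> 'a nrule set \<Rightarrow> bool" where
  "psat Z \<Pi> \<longleftrightarrow> (\<forall>(h, b) \<in> \<Pi>. fsat Z b \<longrightarrow> fsat Z h)"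

fun freduct :: "'a lit set \<Rightarrow> 'a form \<Rightarrow> 'a form" where
  "freduct Z (FLit l) = FLit l"
| "freduct Z FBot = FBot"
| "freduct Z FTop = FTop"
| "freduct Z (FNot F) = (if fsat Z F then FBot else FTop)"
| "freduct Z (FAnd F G) = FAnd (freduct Z F) (freduct Z G)"
| "freduct Z (FOr F G) = FOr (freduct Z F) (freduct Z G)"

definition preduct :: "'a lit set \<Rightarrow> 'a nrule set \<Rightarrow> 'a nrule set" where
  "preduct Z \<Pi> = (\<lambda>(h, b). (freduct Z h, freduct Z b)) ` \<Pi>"

definition min_answer_set :: "'a nrule set \<Rightarrow> 'a lit set \<Rightarrow> bool" where
  "min_answer_set \<Pi> Z \<longleftrightarrow> consistent Z \<and> psat Z \<Pi> \<and>
     (\<forall>Y. consistent Y \<and> Y \<subseteq> Z \<and> psat Y \<Pi> \<longrightarrow> Y = Z)"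

definition nested_answer_set :: "'a nrule set \<Rightarrow> 'a lit set \<Rightarrow> bool" where
  "nested_answer_set \<Pi> Z \<longleftrightarrow> min_answer_set (preduct Z \<Pi>) Z"

fun form_atoms :: "'a form \<Rightarrow> 'a set" where
  "form_atoms (FLit l) = {lit_atom l}"
| "form_atoms FBot = {}"
| "form_atoms FTop = {}"
| "form_atoms (FNot F) = form_atoms F"
| "form_atoms (FAnd F G) = form_atoms F \<union> form_atoms G"
| "form_atoms (FOr F G) = form_atoms F \<union> form_atoms G"

definition prog_atoms :: "'a nrule set \<Rightarrow> 'a set" where
  "prog_atoms \<Pi> = (\<Union>(h, b) \<in> \<Pi>. form_atoms h \<union> form_atoms b)"

fun conj_list :: "'a form list \<Rightarrow> 'a form" where
  "conj_list [] = FTop"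
| "conj_list (F # Fs) = FAnd F (conj_list Fs)"

datatype 'a relem = PosE "'a lit" | NegE "'a lit"   \<comment> \<open>l  /  not l\<close>

text \<open>A weight constraint L \<le> {c1=w1,...,cm=wm} \<le> U; the expression S is a list.\<close>
type_synonym 'a wexpr = "('a relem \<times> real) list"
type_synonym 'a wc = "ereal \<times> 'a wexpr \<times> ereal"
type_synonym 'a wrule = "'a wc \<times> 'a wc list"   \<comment> \<open>C0 \<leftarrow> C1,...,Cn\<close>

fun relem_sat :: "'a lit set \<Rightarrow> 'a relem \<Rightarrow> bool" where
  "relem_sat Z (PosE l) = (l \<in> Z)"
| "relem_sat Z (NegE l) = (l \<notin> Z)"

definition wsum :: "'a lit set \<Rightarrow> 'a wexpr \<Rightarrow> real" where
  "wsum Z S = sum_list (map snd (filter (\<lambda>(c, w). relem_sat Z c) S))"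

fun wc_sat :: "'a lit set \<Rightarrow> 'a wc \<Rightarrow> bool" where
  "wc_sat Z (L, S, U) = (L \<le> ereal (wsum Z S) \<and> ereal (wsum Z S) \<le> U)"

definition wprog_sat :: "'a lit set \<Rightarrow> 'a wrule set \<Rightarrow> bool" where
  "wprog_sat Z \<Omega> \<longleftrightarrow> (\<forall>(C0, Cs) \<in> \<Omega>. (\<forall>C \<in> set Cs. wc_sat Z C) \<longrightarrow> wc_sat Z C0)"

fun is_negE :: "'a relem \<Rightarrow> bool" where
  "is_negE (PosE l) = False" | "is_negE (NegE l) = True"

text \<open>Reduct (L \<le> S)^Z = L^Z \<le> S' with S' consisting of positive pairs only
  (represented as a list of literal/weight pairs).\<close>
fun lower_reduct :: "'a lit set \<Rightarrow> 'a wc \<Rightarrow> ereal \<times> ('a lit \<times> real) list" where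
  "lower_reduct Z (L, S, U) =
     (L - ereal (sum_list (map snd (filter (\<lambda>(c, w). is_negE c \<and> relem_sat Z c) S))),
      [(l, w). (PosE l, w) \<leftarrow> S])"

type_synonym 'a drule = "'a lit \<times> (ereal \<times> ('a lit \<times> real) list) list"

definition wreduct :: "'a lit set \<Rightarrow> 'a wrule set \<Rightarrow> 'a drule set" where
  "wreduct Z \<Omega> = {(l, map (lower_reduct Z) Cs) | l C0 Cs.
      (C0, Cs) \<in> \<Omega> \<and> (\<forall>(L, S, U) \<in> set Cs. ereal (wsum Z S) \<le> U)
      \<and> PosE l \<in> fst ` set (fst (snd C0)) \<and> l \<in> Z}"

definition dsat :: "'a lit set \<Rightarrow> 'a drule set \<Rightarrow> bool" where
  "dsat X R \<longleftrightarrow> (\<forall>(l, Bs) \<in> R.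
      (\<forall>(L, S) \<in> set Bs. L \<le> ereal (sum_list (map snd (filter (\<lambda>(l', w). l' \<in> X) S))))
      \<longrightarrow> l \<in> X)"

definition cl :: "'a drule set \<Rightarrow> 'a lit set" where
  "cl R = \<Inter> {X. dsat X R}"

definition wc_answer_set :: "'a wrule set \<Rightarrow> 'a lit set \<Rightarrow> bool" where
  "wc_answer_set \<Omega> Z \<longleftrightarrow> consistent Z \<and> wprog_sat Z \<Omega> \<and> cl (wreduct Z \<Omega>) = Z"

text \<open>Atoms of the translation: original atoms plus distinct new atoms:
  negation atoms q_{not l} and weight atoms q_{w\<le>S}, q_{w<S}.\<close>
datatype 'a natom = Orig 'a | QNot "'a lit" | QLe ereal "'a wexpr" | QLt ereal "'a wexpr"

fun is_new :: "'a natom \<Rightarrow> bool" where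
  "is_new (Orig a) = False" | "is_new _ = True"

definition lift :: "'a lit \<Rightarrow> 'a natom lit" where
  "lift = map_lit Orig"

fun elem_form :: "'a relem \<Rightarrow> 'a natom form" where
  "elem_form (PosE l) = FLit (lift l)"
| "elem_form (NegE l) = FNot (FLit (lift l))"

definition qatom :: "'a natom \<Rightarrow> 'a natom form" where
  "qatom q = FLit (Pos q)"

definition wtotal :: "'a wexpr \<Rightarrow> ereal" where
  "wtotal S = ereal (sum_list (map snd S))"

definition closed :: "'a natom nrule set \<Rightarrow> bool" where
  "closed \<Pi> \<longleftrightarrow>
    (\<forall>w S. QLe w S \<in> prog_atoms \<Pi> \<longrightarrow>
       (w \<le> 0 \<longrightarrow> (qatom (QLe w S), FTop) \<in> \<Pi>) \<and>
       (0 < w \<and> w \<le> wtotal S \<longrightarrow>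
          (qatom (QLe w S), qatom (QLe w (butlast S))) \<in> \<Pi> \<and>
          (qatom (QLe w S), FAnd (elem_form (fst (last S)))
                                 (qatom (QLe (w - ereal (snd (last S))) (butlast S)))) \<in> \<Pi>)) \<and>
    (\<forall>w S. QLt w S \<in> prog_atoms \<Pi> \<longrightarrow>
       (w < 0 \<longrightarrow> (qatom (QLt w S), FTop) \<in> \<Pi>) \<and>
       (0 \<le> w \<and> w < wtotal S \<longrightarrow>
          (qatom (QLt w S), qatom (QLt w (butlast S))) \<in> \<Pi> \<and>
          (qatom (QLt w S), FAnd (elem_form (fst (last S)))
                                 (qatom (QLt (w - ereal (snd (last S))) (butlast S)))) \<in> \<Pi>))"

fun wc_nn :: "'a wc \<Rightarrow> 'a natom form" where
  "wc_nn (L, S, U) = FAnd (qatom (QLe L S)) (FNot (qatom (QLt U S)))"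

fun rule_base :: "'a wrule \<Rightarrow> 'a natom nrule set" where
  "rule_base ((L0, S0, U0), Cs) =
     {(qatom (QNot l), FNot (FLit (lift l))) | l. PosE l \<in> fst ` set S0} \<union>
     {(FLit (lift l), conj_list (FNot (qatom (QNot l)) # map wc_nn Cs)) | l. PosE l \<in> fst ` set S0} \<union>
     {(FBot, conj_list (FNot (qatom (QLe L0 S0)) # map wc_nn Cs)),
      (FBot, conj_list (qatom (QLt U0 S0) # map wc_nn Cs))}"

definition nn :: "'a wrule set \<Rightarrow> 'a natom nrule set" where
  "nn \<Omega> = \<Inter> {\<Pi>. closed \<Pi> \<and> (\<Union>r\<in>\<Omega>. rule_base r) \<subseteq> \<Pi>}"

definition new_atoms :: "'a wrule set \<Rightarrow> 'a natom set" where
  "new_atoms \<Omega> = {q \<in> prog_atoms (nn \<Omega>). is_new q}"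

end

theory Submission imports Defs begin
definition orig :: "'a natom lit set \<Rightarrow> 'a lit set" where
  "orig Z = {l. lift l \<in> Z}"

fun relem_red :: "'a lit set \<Rightarrow> 'a lit set \<Rightarrow> 'a relem \<Rightarrow> bool" where
  "relem_red M X (PosE l) = (l \<in> M)"
| "relem_red M X (NegE l) = (l \<notin> X)"

definition fsum :: "('b \<Rightarrow> bool) \<Rightarrow> ('b \<times> real) list \<Rightarrow> real" where
  "fsum P S = sum_list (map snd (filter (\<lambda>(c, w). P c) S))"

definition nnok :: "('b \<times> real) list \<Rightarrow> bool" where
  "nnok S \<longleftrightarrow> (\<forall>(c, w) \<in> set S. 0 \<le> w)"

lemma fsum_Nil[simp]: "fsum P [] = 0" by (simp add: fsum_def)
lemma fsum_Cons[simp]: "fsum P ((c,w) # S) = (if P c then w else 0) + fsum P S"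
  by (simp add: fsum_def)
lemma fsum_snoc: "fsum P (S @ [(c,w)]) = fsum P S + (if P c then w else 0)"
  by (simp add: fsum_def)
lemma nnok_Cons[simp]: "nnok ((c,w) # S) \<longleftrightarrow> 0 \<le> w \<and> nnok S"
  by (auto simp: nnok_def)
lemma nnok_Nil[simp]: "nnok []" by (simp add: nnok_def)

lemma fsum_nonneg: "nnok S \<Longrightarrow> 0 \<le> fsum P S"
  by (induction S) auto

lemma fsum_mono: "nnok S \<Longrightarrow> (\<And>c. P c \<Longrightarrow> Q c) \<Longrightarrow> fsum P S \<le> fsum Q S"
  by (induction S) (auto intro: add_mono)

lemma fsum_le_total: "nnok S \<Longrightarrow> fsum P S \<le> sum_list (map snd S)"
  by (induction S) (auto intro: add_mono)

lemma nnok_butlast: "nnok S \<Longrightarrow> nnok (butlast S)"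
  unfolding nnok_def by (auto dest: in_set_butlastD)

lemma fsum_butlast:
  assumes "S \<noteq> []"
  shows "fsum P S = fsum P (butlast S) + (if P (fst (last S)) then snd (last S) else 0)"
proof -
  have "S = butlast S @ [(fst (last S), snd (last S))]" using assms by simp
  then have "fsum P S = fsum P (butlast S @ [(fst (last S), snd (last S))])" by simp
  then show ?thesis by (simp only: fsum_snoc)
qed

lemma fsum_butlast_le:
  assumes "S \<noteq> []" "nnok S"
  shows "fsum P (butlast S) \<le> fsum P S"
proof -
  have "last S \<in> set S" using assms(1) by simp
  then have "0 \<le> snd (last S)" using assms(2) unfolding nnok_def by auto
  then show ?thesis using fsum_butlast[OF assms(1), of P] by auto
qed

lemma wsum_fsum: "wsum Z S = fsum (relem_sat Z) S"
  by (simp add: wsum_def fsum_def)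

lemma relem_red_same: "relem_red X X c = relem_sat X c"
  by (cases c) auto

lemma lift_simps[simp]: "lift (Pos a) = Pos (Orig a)" "lift (Neg a) = Neg (Orig a)"
  by (simp_all add: lift_def)

lemma inj_lift: "inj lift"
proof (rule injI)
  fix x y :: "'a lit" assume "lift x = lift y" then show "x = y" by (cases x; cases y) auto
qed

lemma lift_eq_iff[simp]: "lift l = lift l' \<longleftrightarrow> l = l'"
  using inj_lift by (auto dest: injD)

lemma lift_ne_new[simp]: "is_new q \<Longrightarrow> lift l \<noteq> Pos q"
  by (cases l; cases q) auto

lemma lift_ne_q[simp]: "lift l \<noteq> Pos (QNot x)" "lift l \<noteq> Pos (QLe w S)" "lift l \<noteq> Pos (QLt w S)"
   "Pos (QNot x) \<noteq> lift l" "Pos (QLe w S) \<noteq> lift l" "Pos (QLt w S) \<noteq> lift l"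
  by (cases l; simp)+

lemma orig_lift[simp]: "orig (lift ` X \<union> Pos ` Q) = X" if "\<forall>q\<in>Q. is_new q"
  using that unfolding orig_def by (auto simp: image_iff)


lemma lit_atom_lift[simp]: "lit_atom (lift l) = Orig (lit_atom l)"
  by (cases l) auto

definition cloLe :: "ereal \<Rightarrow> 'a wexpr \<Rightarrow> 'a natom nrule set" where
  "cloLe w S = (if w \<le> 0 then {(qatom (QLe w S), FTop)} else {}) \<union>
     (if 0 < w \<and> w \<le> wtotal S then
       {(qatom (QLe w S), qatom (QLe w (butlast S))),
        (qatom (QLe w S), FAnd (elem_form (fst (last S)))
                                 (qatom (QLe (w - ereal (snd (last S))) (butlast S))))} else {})"

definition cloLt :: "ereal \<Rightarrow> 'a wexpr \<Rightarrow> 'a natom nrule set" where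
  "cloLt w S = (if w < 0 then {(qatom (QLt w S), FTop)} else {}) \<union>
     (if 0 \<le> w \<and> w < wtotal S then
       {(qatom (QLt w S), qatom (QLt w (butlast S))),
        (qatom (QLt w S), FAnd (elem_form (fst (last S)))
                                 (qatom (QLt (w - ereal (snd (last S))) (butlast S))))} else {})"

definition Tset :: "'a wrule set \<Rightarrow> 'a natom nrule set" where
  "Tset \<Omega> = (\<Union>r\<in>\<Omega>. rule_base r) \<union> (\<Union>w. \<Union>S\<in>{S. nnok S}. cloLe w S \<union> cloLt w S)"

fun good :: "'a natom \<Rightarrow> bool" where
  "good (QLe w S) = nnok S"
| "good (QLt w S) = nnok S"
| "good _ = True"

lemma form_atoms_conj_list: "form_atoms (conj_list Fs) = \<Union>(form_atoms ` set Fs)"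
  by (induction Fs) auto

lemma form_atoms_qatom[simp]: "form_atoms (qatom q) = {q}"
  by (simp add: qatom_def)

lemma form_atoms_lift[simp]: "form_atoms (FLit (lift l)) = {Orig (lit_atom l)}"
  by (cases l) auto

lemma form_atoms_elem: "a \<in> form_atoms (elem_form c) \<Longrightarrow> \<exists>x. a = Orig x"
  by (cases c) auto

lemma good_elem: "a \<in> form_atoms (elem_form c) \<Longrightarrow> good a"
  by (cases c) auto

lemma form_atoms_wc_nn: "form_atoms (wc_nn C) = {QLe (fst C) (fst (snd C)), QLt (snd (snd C)) (fst (snd C))}"
  by (cases C) auto

definition nonneg_prog :: "'a wrule set \<Rightarrow> bool" where
  "nonneg_prog \<Omega> \<longleftrightarrow> (\<forall>(C0, Cs) \<in> \<Omega>. \<forall>(L, S, U) \<in> set (C0 # Cs). \<forall>(c, w) \<in> set S. 0 \<le> w)"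

lemma nonneg_progD:
  assumes "nonneg_prog \<Omega>" "(C0, Cs) \<in> \<Omega>" "C \<in> set (C0 # Cs)"
  shows "nnok (fst (snd C))"
  using assms unfolding nonneg_prog_def nnok_def by (cases C) fastforce

lemma Tset_good:
  assumes "nonneg_prog \<Omega>" "(h, b) \<in> Tset \<Omega>" "a \<in> form_atoms h \<union> form_atoms b"
  shows "good a"
proof -
  have "(\<exists>r\<in>\<Omega>. (h, b) \<in> rule_base r) \<or> (\<exists>w S. nnok S \<and> (h, b) \<in> cloLe w S \<union> cloLt w S)"
    using assms(2) unfolding Tset_def by blast
  then show ?thesis
  proof (elim disjE exE conjE bexE)
  fix r assume r: "r \<in> \<Omega>" and hb: "(h, b) \<in> rule_base r"
  obtain L0 S0 U0 Cs where req: "r = ((L0, S0, U0), Cs)" by (metis prod_cases3 surj_pair)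
  have C0: "nnok S0" using nonneg_progD[OF assms(1) r[unfolded req], of "(L0,S0,U0)"] by simp
  have Cs: "nnok (fst (snd C))" if "C \<in> set Cs" for C
    using nonneg_progD[OF assms(1) r[unfolded req], of C] that by simp
  show "good a" using hb assms(3) C0 Cs unfolding req
    by (auto simp: form_atoms_conj_list form_atoms_wc_nn)
next
  fix w S assume S: "nnok S" and hb: "(h, b) \<in> cloLe w S \<union> cloLt w S"
  then have "nnok S" "nnok (butlast S)" by (auto simp: nnok_butlast)
  then show "good a" using hb assms(3)
    by (auto simp: cloLe_def cloLt_def split: if_splits dest: good_elem)
  qed
qed

lemma prog_atoms_iff: "a \<in> prog_atoms \<Pi> \<longleftrightarrow> (\<exists>(h, b) \<in> \<Pi>. a \<in> form_atoms h \<union> form_atoms b)"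
  unfolding prog_atoms_def by auto

lemma prog_atoms_mono: "A \<subseteq> B \<Longrightarrow> prog_atoms A \<subseteq> prog_atoms B"
  unfolding prog_atoms_def by auto

lemma Tset_closed:
  assumes "nonneg_prog \<Omega>"
  shows "closed (Tset \<Omega>)"
proof -
  have g: "good a" if "a \<in> prog_atoms (Tset \<Omega>)" for a
    using that Tset_good[OF assms] unfolding prog_atoms_iff by blast
  have le: "cloLe w S \<subseteq> Tset \<Omega>" if "nnok S" for w S
    using that unfolding Tset_def by blast
  have lt: "cloLt w S \<subseteq> Tset \<Omega>" if "nnok S" for w S
    using that unfolding Tset_def by blast
  show ?thesis unfolding closed_def
  proof (intro conjI allI impI)
    fix w S assume "QLe w S \<in> prog_atoms (Tset \<Omega>)"
    then have "nnok S" using g by fastforce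
    then have sub: "cloLe w S \<subseteq> Tset \<Omega>" by (rule le)
    { assume "w \<le> 0" then show "(qatom (QLe w S), FTop) \<in> Tset \<Omega>" using sub by (auto simp: cloLe_def) }
    { assume "0 < w \<and> w \<le> wtotal S"
      then show "(qatom (QLe w S), qatom (QLe w (butlast S))) \<in> Tset \<Omega>"
        using sub by (auto simp: cloLe_def) }
    { assume "0 < w \<and> w \<le> wtotal S"
      then show "(qatom (QLe w S), FAnd (elem_form (fst (last S)))
                                 (qatom (QLe (w - ereal (snd (last S))) (butlast S)))) \<in> Tset \<Omega>"
        using sub by (auto simp: cloLe_def) }
  next
    fix w S assume "QLt w S \<in> prog_atoms (Tset \<Omega>)"
    then have "nnok S" using g by fastforce
    then have sub: "cloLt w S \<subseteq> Tset \<Omega>" by (rule lt)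
    { assume "w < 0" then show "(qatom (QLt w S), FTop) \<in> Tset \<Omega>" using sub by (auto simp: cloLt_def) }
    { assume "0 \<le> w \<and> w < wtotal S"
      then show "(qatom (QLt w S), qatom (QLt w (butlast S))) \<in> Tset \<Omega>"
        using sub by (auto simp: cloLt_def) }
    { assume "0 \<le> w \<and> w < wtotal S"
      then show "(qatom (QLt w S), FAnd (elem_form (fst (last S)))
                                 (qatom (QLt (w - ereal (snd (last S))) (butlast S)))) \<in> Tset \<Omega>"
        using sub by (auto simp: cloLt_def) }
  qed
qed

lemma closedD_le:
  assumes "closed \<Pi>" "QLe w S \<in> prog_atoms \<Pi>"
  shows "(w \<le> 0 \<longrightarrow> (qatom (QLe w S), FTop) \<in> \<Pi>) \<and>
       (0 < w \<and> w \<le> wtotal S \<longrightarrow>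
          (qatom (QLe w S), qatom (QLe w (butlast S))) \<in> \<Pi> \<and>
          (qatom (QLe w S), FAnd (elem_form (fst (last S)))
                                 (qatom (QLe (w - ereal (snd (last S))) (butlast S)))) \<in> \<Pi>)"
  using assms(1)[unfolded closed_def, THEN conjunct1, rule_format, OF assms(2)] .

lemma closedD_lt:
  assumes "closed \<Pi>" "QLt w S \<in> prog_atoms \<Pi>"
  shows "(w < 0 \<longrightarrow> (qatom (QLt w S), FTop) \<in> \<Pi>) \<and>
       (0 \<le> w \<and> w < wtotal S \<longrightarrow>
          (qatom (QLt w S), qatom (QLt w (butlast S))) \<in> \<Pi> \<and>
          (qatom (QLt w S), FAnd (elem_form (fst (last S)))
                                 (qatom (QLt (w - ereal (snd (last S))) (butlast S)))) \<in> \<Pi>)"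
  using assms(1)[unfolded closed_def, THEN conjunct2, rule_format, OF assms(2)] .

lemma closed_Inter:
  assumes "\<forall>\<Pi>\<in>F. closed \<Pi>"
  shows "closed (\<Inter>F)"
proof -
  have pa: "a \<in> prog_atoms \<Pi>" if "a \<in> prog_atoms (\<Inter>F)" "\<Pi> \<in> F" for a \<Pi>
    using prog_atoms_mono[of "\<Inter>F" \<Pi>] that by blast
  show ?thesis
    unfolding closed_def
  proof (intro conjI allI impI)
    fix w S assume a: "QLe w S \<in> prog_atoms (\<Inter>F)"
    have c: "(w \<le> 0 \<longrightarrow> (qatom (QLe w S), FTop) \<in> \<Pi>) \<and>
       (0 < w \<and> w \<le> wtotal S \<longrightarrow>
          (qatom (QLe w S), qatom (QLe w (butlast S))) \<in> \<Pi> \<and>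
          (qatom (QLe w S), FAnd (elem_form (fst (last S)))
                                 (qatom (QLe (w - ereal (snd (last S))) (butlast S)))) \<in> \<Pi>)"
      if "\<Pi> \<in> F" for \<Pi>
      using assms pa[OF a that] that closedD_le by blast
    { assume "w \<le> 0" then show "(qatom (QLe w S), FTop) \<in> \<Inter>F"
        using c by (intro InterI) simp }
    { assume "0 < w \<and> w \<le> wtotal S"
      then show "(qatom (QLe w S), qatom (QLe w (butlast S))) \<in> \<Inter>F"
        using c by (intro InterI) simp_all }
    { assume "0 < w \<and> w \<le> wtotal S"
      then show "(qatom (QLe w S), FAnd (elem_form (fst (last S)))
                                 (qatom (QLe (w - ereal (snd (last S))) (butlast S)))) \<in> \<Inter>F"
        using c by (intro InterI) simp_all }
  next
    fix w S assume a: "QLt w S \<in> prog_atoms (\<Inter>F)"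
    have c: "(w < 0 \<longrightarrow> (qatom (QLt w S), FTop) \<in> \<Pi>) \<and>
       (0 \<le> w \<and> w < wtotal S \<longrightarrow>
          (qatom (QLt w S), qatom (QLt w (butlast S))) \<in> \<Pi> \<and>
          (qatom (QLt w S), FAnd (elem_form (fst (last S)))
                                 (qatom (QLt (w - ereal (snd (last S))) (butlast S)))) \<in> \<Pi>)"
      if "\<Pi> \<in> F" for \<Pi>
      using assms pa[OF a that] that closedD_lt by blast
    { assume "w < 0" then show "(qatom (QLt w S), FTop) \<in> \<Inter>F"
        using c by (intro InterI) simp }
    { assume "0 \<le> w \<and> w < wtotal S"
      then show "(qatom (QLt w S), qatom (QLt w (butlast S))) \<in> \<Inter>F"
        using c by (intro InterI) simp_all }
    { assume "0 \<le> w \<and> w < wtotal S"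
      then show "(qatom (QLt w S), FAnd (elem_form (fst (last S)))
                                 (qatom (QLt (w - ereal (snd (last S))) (butlast S)))) \<in> \<Inter>F"
        using c by (intro InterI) simp_all }
  qed
qed

lemma nn_closed: "closed (nn \<Omega>)"
  unfolding nn_def by (rule closed_Inter) blast

lemma nn_base: "r \<in> \<Omega> \<Longrightarrow> rule_base r \<subseteq> nn \<Omega>"
  unfolding nn_def by blast

lemma nn_sub_T:
  assumes "nonneg_prog \<Omega>" shows "nn \<Omega> \<subseteq> Tset \<Omega>"
proof -
  have "(\<Union>r\<in>\<Omega>. rule_base r) \<subseteq> Tset \<Omega>" unfolding Tset_def by (rule Un_upper1)
  then have "Tset \<Omega> \<in> {\<Pi>. closed \<Pi> \<and> (\<Union>r\<in>\<Omega>. rule_base r) \<subseteq> \<Pi>}"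
    using Tset_closed[OF assms] by simp
  then show ?thesis unfolding nn_def by (rule Inter_lower)
qed

lemma pa_good: "nonneg_prog \<Omega> \<Longrightarrow> a \<in> prog_atoms (nn \<Omega>) \<Longrightarrow> good a"
  using Tset_good[of \<Omega>] nn_sub_T[of \<Omega>] unfolding prog_atoms_iff by blast

lemma pa_rule: "(h, b) \<in> \<Pi> \<Longrightarrow> form_atoms h \<union> form_atoms b \<subseteq> prog_atoms \<Pi>"
  unfolding prog_atoms_def by blast

lemma nn_cases:
  assumes np: "nonneg_prog \<Omega>" and hb: "(h, b) \<in> nn \<Omega>"
  obtains
    (qnot) l L0 S0 U0 Cs where "((L0,S0,U0),Cs) \<in> \<Omega>" "PosE l \<in> fst ` set S0"
      "h = qatom (QNot l)" "b = FNot (FLit (lift l))"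
  | (lrule) l L0 S0 U0 Cs where "((L0,S0,U0),Cs) \<in> \<Omega>" "PosE l \<in> fst ` set S0"
      "h = FLit (lift l)" "b = conj_list (FNot (qatom (QNot l)) # map wc_nn Cs)"
  | (bot1) L0 S0 U0 Cs where "((L0,S0,U0),Cs) \<in> \<Omega>"
      "h = FBot" "b = conj_list (FNot (qatom (QLe L0 S0)) # map wc_nn Cs)"
  | (bot2) L0 S0 U0 Cs where "((L0,S0,U0),Cs) \<in> \<Omega>"
      "h = FBot" "b = conj_list (qatom (QLt U0 S0) # map wc_nn Cs)"
  | (le0) w S where "nnok S" "w \<le> 0" "h = qatom (QLe w S)" "b = FTop"
  | (le1) w S where "nnok S" "0 < w" "w \<le> wtotal S" "h = qatom (QLe w S)" "b = qatom (QLe w (butlast S))"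
  | (le2) w S where "nnok S" "0 < w" "w \<le> wtotal S" "h = qatom (QLe w S)"
      "b = FAnd (elem_form (fst (last S))) (qatom (QLe (w - ereal (snd (last S))) (butlast S)))"
  | (lt0) w S where "nnok S" "w < 0" "h = qatom (QLt w S)" "b = FTop"
  | (lt1) w S where "nnok S" "0 \<le> w" "w < wtotal S" "h = qatom (QLt w S)" "b = qatom (QLt w (butlast S))"
  | (lt2) w S where "nnok S" "0 \<le> w" "w < wtotal S" "h = qatom (QLt w S)"
      "b = FAnd (elem_form (fst (last S))) (qatom (QLt (w - ereal (snd (last S))) (butlast S)))"
proof -
  have "(h, b) \<in> Tset \<Omega>" using nn_sub_T[OF np] hb by blast
  then have "(\<exists>r\<in>\<Omega>. (h, b) \<in> rule_base r) \<or> (\<exists>w S. nnok S \<and> (h, b) \<in> cloLe w S \<union> cloLt w S)"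
    unfolding Tset_def by blast
  then show ?thesis
  proof (elim disjE exE conjE bexE)
    fix r assume r: "r \<in> \<Omega>" and hb: "(h, b) \<in> rule_base r"
    obtain L0 S0 U0 Cs where req: "r = ((L0, S0, U0), Cs)" by (metis prod_cases3 surj_pair)
    have r': "((L0, S0, U0), Cs) \<in> \<Omega>" using r req by simp
    show ?thesis using hb unfolding req by (auto intro: that(1-4)[OF r'])
  next
    fix w S assume S: "nnok S" and hb: "(h, b) \<in> cloLe w S \<union> cloLt w S"
    let ?e = "elem_form (fst (last S))"
    let ?v = "w - ereal (snd (last S))"
    have "(w \<le> 0 \<and> (h, b) = (qatom (QLe w S), FTop)) \<or>
          (0 < w \<and> w \<le> wtotal S \<and> (h, b) = (qatom (QLe w S), qatom (QLe w (butlast S)))) \<or>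
          (0 < w \<and> w \<le> wtotal S \<and> (h, b) = (qatom (QLe w S), FAnd ?e (qatom (QLe ?v (butlast S))))) \<or>
          (w < 0 \<and> (h, b) = (qatom (QLt w S), FTop)) \<or>
          (0 \<le> w \<and> w < wtotal S \<and> (h, b) = (qatom (QLt w S), qatom (QLt w (butlast S)))) \<or>
          (0 \<le> w \<and> w < wtotal S \<and> (h, b) = (qatom (QLt w S), FAnd ?e (qatom (QLt ?v (butlast S)))))"
      using hb unfolding cloLe_def cloLt_def
      by (simp only: Un_iff insert_iff empty_iff split: if_split_asm) blast+
    then show ?thesis
    proof (elim disjE conjE)
      assume "w \<le> 0" "(h, b) = (qatom (QLe w S), FTop)"
      then show ?thesis using that(5)[OF S] by simp
    next
      assume "0 < w" "w \<le> wtotal S" "(h, b) = (qatom (QLe w S), qatom (QLe w (butlast S)))"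
      then show ?thesis using that(6)[OF S] by simp
    next
      assume "0 < w" "w \<le> wtotal S" "(h, b) = (qatom (QLe w S), FAnd ?e (qatom (QLe ?v (butlast S))))"
      then show ?thesis using that(7)[OF S] by simp
    next
      assume "w < 0" "(h, b) = (qatom (QLt w S), FTop)"
      then show ?thesis using that(8)[OF S] by simp
    next
      assume "0 \<le> w" "w < wtotal S" "(h, b) = (qatom (QLt w S), qatom (QLt w (butlast S)))"
      then show ?thesis using that(9)[OF S] by simp
    next
      assume "0 \<le> w" "w < wtotal S" "(h, b) = (qatom (QLt w S), FAnd ?e (qatom (QLt ?v (butlast S))))"
      then show ?thesis using that(10)[OF S] by simp
    qed
  qed
qed

lemma pa_qnot:
  assumes np: "nonneg_prog \<Omega>" and a: "QNot l \<in> prog_atoms (nn \<Omega>)"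
  shows "(qatom (QNot l), FNot (FLit (lift l))) \<in> nn \<Omega>"
proof -
  obtain h b where hb: "(h, b) \<in> nn \<Omega>" and ab: "QNot l \<in> form_atoms h \<union> form_atoms b"
    using a unfolding prog_atoms_iff by blast
  from np hb show ?thesis
  proof (cases rule: nn_cases)
    case (qnot l' L0 S0 U0 Cs)
    then show ?thesis using ab nn_base[OF qnot(1)] by auto
  next
    case (lrule l' L0 S0 U0 Cs)
    then show ?thesis using ab nn_base[OF lrule(1)]
      by (auto simp: form_atoms_conj_list form_atoms_wc_nn)
  qed (use ab in \<open>auto simp: form_atoms_conj_list form_atoms_wc_nn dest: form_atoms_elem\<close>)
qed

definition rsum :: "'a lit set \<Rightarrow> 'a lit set \<Rightarrow> 'a wexpr \<Rightarrow> real" where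
  "rsum M X S = fsum (relem_red M X) S"

definition newpart :: "'a natom set \<Rightarrow> 'a lit set \<Rightarrow> 'a lit set \<Rightarrow> 'a natom lit set" where
  "newpart PA M X = Pos ` ({QNot l | l. QNot l \<in> PA \<and> l \<notin> X} \<union>
     {QLe w S | w S. QLe w S \<in> PA \<and> w \<le> ereal (rsum M X S)} \<union>
     {QLt w S | w S. QLt w S \<in> PA \<and> w < ereal (rsum M X S)})"

definition ext :: "'a natom set \<Rightarrow> 'a lit set \<Rightarrow> 'a natom lit set" where
  "ext PA X = lift ` X \<union> newpart PA X X"

lemma newpart_QNot[simp]: "Pos (QNot l) \<in> newpart PA M X \<longleftrightarrow> QNot l \<in> PA \<and> l \<notin> X"
  unfolding newpart_def by auto
lemma newpart_QLe[simp]: "Pos (QLe w S) \<in> newpart PA M X \<longleftrightarrow> QLe w S \<in> PA \<and> w \<le> ereal (rsum M X S)"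
  unfolding newpart_def by auto
lemma newpart_QLt[simp]: "Pos (QLt w S) \<in> newpart PA M X \<longleftrightarrow> QLt w S \<in> PA \<and> w < ereal (rsum M X S)"
  unfolding newpart_def by auto
lemma newpart_lift[simp]: "lift l \<notin> newpart PA M X"
  unfolding newpart_def by auto
lemma newpart_new: "newpart PA M X \<subseteq> Pos ` {q \<in> PA. is_new q}"
  unfolding newpart_def by auto

lemma orig_V[simp]: "orig (lift ` M \<union> newpart PA M' X) = M"
  unfolding orig_def by (auto simp: image_iff)

lemma orig_ext[simp]: "orig (ext PA X) = X"
  unfolding ext_def by simp

lemma lift_in_V[simp]: "lift l \<in> lift ` M \<union> newpart PA M' X \<longleftrightarrow> l \<in> M"
  by (auto simp: image_iff)

lemma QNot_in_V[simp]: "Pos (QNot l) \<in> lift ` M \<union> newpart PA M' X \<longleftrightarrow> QNot l \<in> PA \<and> l \<notin> X"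
  by (auto simp: image_iff)
lemma QLe_in_V[simp]: "Pos (QLe w S) \<in> lift ` M \<union> newpart PA M' X \<longleftrightarrow> QLe w S \<in> PA \<and> w \<le> ereal (rsum M' X S)"
  by (auto simp: image_iff)
lemma QLt_in_V[simp]: "Pos (QLt w S) \<in> lift ` M \<union> newpart PA M' X \<longleftrightarrow> QLt w S \<in> PA \<and> w < ereal (rsum M' X S)"
  by (auto simp: image_iff)

lemma in_orig[simp]: "l \<in> orig Z \<longleftrightarrow> lift l \<in> Z"
  by (simp add: orig_def)

lemma rsum_same: "rsum X X S = wsum X S"
proof -
  have "relem_red X X = relem_sat X" by (rule ext) (simp add: relem_red_same)
  then show ?thesis by (simp add: rsum_def wsum_fsum)
qed

lemma ereal_minus_le: "(w - ereal a \<le> ereal b) \<longleftrightarrow> (w \<le> ereal (b + a))"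
  by (cases w) auto
lemma ereal_minus_less: "(w - ereal a < ereal b) \<longleftrightarrow> (w < ereal (b + a))"
  by (cases w) auto

section \<open>Formula evaluation\<close>

lemma freduct_qatom[simp]: "freduct Z (qatom q) = qatom q"
  by (simp add: qatom_def)
lemma fsat_qatom[simp]: "fsat Y (qatom q) \<longleftrightarrow> Pos q \<in> Y"
  by (simp add: qatom_def)
lemma fsat_conj_list[simp]: "fsat Y (conj_list Fs) \<longleftrightarrow> (\<forall>F\<in>set Fs. fsat Y F)"
  by (induction Fs) auto
lemma freduct_conj_list[simp]: "freduct Z (conj_list Fs) = conj_list (map (freduct Z) Fs)"
  by (induction Fs) auto
lemma fsat_wc_nn_red: "fsat Y (freduct Z (wc_nn C)) \<longleftrightarrow>
    Pos (QLe (fst C) (fst (snd C))) \<in> Y \<and> Pos (QLt (snd (snd C)) (fst (snd C))) \<notin> Z"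
  by (cases C) auto
lemma fsat_elem_red: "fsat Y (freduct Z (elem_form c)) \<longleftrightarrow> relem_red (orig Y) (orig Z) c"
  by (cases c) auto

lemma fsat_freduct_mono: "fsat Y (freduct Z F) \<Longrightarrow> Y \<subseteq> Y' \<Longrightarrow> fsat Y' (freduct Z F)"
  by (induction F) auto

lemma psat_preduct: "psat Y (preduct Z \<Pi>) \<longleftrightarrow> (\<forall>(h, b)\<in>\<Pi>. fsat Y (freduct Z b) \<longrightarrow> fsat Y (freduct Z h))"
  unfolding psat_def preduct_def by auto

lemma fires: "psat Y (preduct Z \<Pi>) \<Longrightarrow> (h, b) \<in> \<Pi> \<Longrightarrow> fsat Y (freduct Z b) \<Longrightarrow> fsat Y (freduct Z h)"
  unfolding psat_preduct by auto

lemma consistent_subset: "consistent Z \<Longrightarrow> Y \<subseteq> Z \<Longrightarrow> consistent Y"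
  unfolding consistent_def by blast

section \<open>Sums\<close>

lemma rsum_snoc: "rsum M X (S @ [(c, wm)]) = rsum M X S + (if relem_red M X c then wm else 0)"
  by (simp add: rsum_def fsum_snoc)

lemma relem_red_mono: "M \<subseteq> M' \<Longrightarrow> relem_red M X c \<Longrightarrow> relem_red M' X c"
  by (cases c) auto

lemma rsum_mono: "nnok S \<Longrightarrow> M \<subseteq> M' \<Longrightarrow> rsum M X S \<le> rsum M' X S"
  unfolding rsum_def by (rule fsum_mono) (auto intro: relem_red_mono)

lemma rsum_nonneg: "nnok S \<Longrightarrow> 0 \<le> rsum M X S"
  unfolding rsum_def by (rule fsum_nonneg)

lemma rsum_le_total: "nnok S \<Longrightarrow> ereal (rsum M X S) \<le> wtotal S"
  unfolding rsum_def wtotal_def using fsum_le_total by auto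

lemma rsum_split:
  "rsum M X S = fsum (\<lambda>l'. l' \<in> M) [(l, w). (PosE l, w) \<leftarrow> S] +
     sum_list (map snd (filter (\<lambda>(c, w). is_negE c \<and> relem_sat X c) S))"
proof (induction S)
  case Nil then show ?case by (simp add: rsum_def)
next
  case (Cons x S)
  obtain c w where x: "x = (c, w)" by fastforce
  show ?case using Cons unfolding x by (cases c) (auto simp: rsum_def)
qed

lemma nnok_pos: "nnok S \<Longrightarrow> nnok [(l, w). (PosE l, w) \<leftarrow> (S :: 'a wexpr)]"
proof (induction S)
  case Nil then show ?case by simp
next
  case (Cons x S)
  obtain c w where x: "x = (c, w)" by fastforce
  show ?case using Cons unfolding x by (cases c) auto
qed

lemma wtotal_Nil[simp]: "wtotal [] = 0"
  by (simp add: wtotal_def zero_ereal_def)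

lemma rsum_butlast:
  "S \<noteq> [] \<Longrightarrow> rsum M X S = rsum M X (butlast S) + (if relem_red M X (fst (last S)) then snd (last S) else 0)"
  unfolding rsum_def by (rule fsum_butlast)

lemma rsum_butlast_le: "S \<noteq> [] \<Longrightarrow> nnok S \<Longrightarrow> rsum M X (butlast S) \<le> rsum M X S"
  unfolding rsum_def by (rule fsum_butlast_le)

lemma qatom_inj[simp]: "qatom q = qatom q' \<longleftrightarrow> q = q'"
  by (simp add: qatom_def)
lemma qatom_ne[simp]: "qatom q \<noteq> FBot" "FLit (lift l) = qatom q \<longleftrightarrow> lift l = Pos q"
  by (auto simp: qatom_def)

lemma lower:
  assumes np: "nonneg_prog \<Omega>" and Y: "psat Y (preduct Z (nn \<Omega>))"
  shows "newpart (prog_atoms (nn \<Omega>)) (orig Y) (orig Z) \<subseteq> Y"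
proof -
  let ?N = "nn \<Omega>" let ?PA = "prog_atoms (nn \<Omega>)" let ?M = "orig Y" let ?X = "orig Z"
  have le: "QLe w S \<in> ?PA \<Longrightarrow> w \<le> ereal (rsum ?M ?X S) \<Longrightarrow> Pos (QLe w S) \<in> Y" for w S
  proof (induction S arbitrary: w rule: rev_induct)
    case Nil
    then have "w \<le> 0" by (simp add: rsum_def zero_ereal_def)
    then have "(qatom (QLe w []), FTop) \<in> ?N" using closedD_le[OF nn_closed Nil(1)] by blast
    from fires[OF Y this] show ?case by simp
  next
    case (snoc x S)
    obtain c wm where x: "x = (c, wm)" by fastforce
    have ok: "nnok (S @ [x])" using pa_good[OF np snoc.prems(1)] by simp
    show ?case
    proof (cases "w \<le> 0")
      case True
      then have "(qatom (QLe w (S @ [x])), FTop) \<in> ?N" using closedD_le[OF nn_closed snoc.prems(1)] by blast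
      from fires[OF Y this] show ?thesis by simp
    next
      case False
      then have w0: "0 < w" by simp
      have "w \<le> wtotal (S @ [x])" using snoc.prems(2) rsum_le_total[OF ok] order_trans by blast
      then have r1: "(qatom (QLe w (S @ [x])), qatom (QLe w S)) \<in> ?N"
        and r2: "(qatom (QLe w (S @ [x])), FAnd (elem_form c) (qatom (QLe (w - ereal wm) S))) \<in> ?N"
        using closedD_le[OF nn_closed snoc.prems(1)] w0 unfolding x by auto
      show ?thesis
      proof (cases "relem_red ?M ?X c")
        case True
        have "QLe (w - ereal wm) S \<in> ?PA" using pa_rule[OF r2] by auto
        moreover have "w - ereal wm \<le> ereal (rsum ?M ?X S)"
          using snoc.prems(2) True unfolding x rsum_snoc by (simp add: ereal_minus_le)
        ultimately have "Pos (QLe (w - ereal wm) S) \<in> Y" by (rule snoc.IH)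
        then show ?thesis using fires[OF Y r2] True by (simp add: fsat_elem_red)
      next
        case False
        have "QLe w S \<in> ?PA" using pa_rule[OF r1] by auto
        moreover have "w \<le> ereal (rsum ?M ?X S)" using snoc.prems(2) False unfolding x rsum_snoc by simp
        ultimately have "Pos (QLe w S) \<in> Y" by (rule snoc.IH)
        then show ?thesis using fires[OF Y r1] by simp
      qed
    qed
  qed
  have lt: "QLt w S \<in> ?PA \<Longrightarrow> w < ereal (rsum ?M ?X S) \<Longrightarrow> Pos (QLt w S) \<in> Y" for w S
  proof (induction S arbitrary: w rule: rev_induct)
    case Nil
    then have "w < 0" by (simp add: rsum_def zero_ereal_def)
    then have "(qatom (QLt w []), FTop) \<in> ?N" using closedD_lt[OF nn_closed Nil(1)] by blast
    from fires[OF Y this] show ?case by simp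
  next
    case (snoc x S)
    obtain c wm where x: "x = (c, wm)" by fastforce
    have ok: "nnok (S @ [x])" using pa_good[OF np snoc.prems(1)] by simp
    show ?case
    proof (cases "w < 0")
      case True
      then have "(qatom (QLt w (S @ [x])), FTop) \<in> ?N" using closedD_lt[OF nn_closed snoc.prems(1)] by blast
      from fires[OF Y this] show ?thesis by simp
    next
      case False
      then have w0: "0 \<le> w" by simp
      have "w < wtotal (S @ [x])" using snoc.prems(2) rsum_le_total[OF ok] by (rule less_le_trans)
      then have r1: "(qatom (QLt w (S @ [x])), qatom (QLt w S)) \<in> ?N"
        and r2: "(qatom (QLt w (S @ [x])), FAnd (elem_form c) (qatom (QLt (w - ereal wm) S))) \<in> ?N"
        using closedD_lt[OF nn_closed snoc.prems(1)] w0 unfolding x by auto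
      show ?thesis
      proof (cases "relem_red ?M ?X c")
        case True
        have "QLt (w - ereal wm) S \<in> ?PA" using pa_rule[OF r2] by auto
        moreover have "w - ereal wm < ereal (rsum ?M ?X S)"
          using snoc.prems(2) True unfolding x rsum_snoc by (simp add: ereal_minus_less)
        ultimately have "Pos (QLt (w - ereal wm) S) \<in> Y" by (rule snoc.IH)
        then show ?thesis using fires[OF Y r2] True by (simp add: fsat_elem_red)
      next
        case False
        have "QLt w S \<in> ?PA" using pa_rule[OF r1] by auto
        moreover have "w < ereal (rsum ?M ?X S)" using snoc.prems(2) False unfolding x rsum_snoc by simp
        ultimately have "Pos (QLt w S) \<in> Y" by (rule snoc.IH)
        then show ?thesis using fires[OF Y r1] by simp
      qed
    qed
  qed
  have qn: "QNot l \<in> ?PA \<Longrightarrow> l \<notin> ?X \<Longrightarrow> Pos (QNot l) \<in> Y" for l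
    using fires[OF Y pa_qnot[OF np]] by simp
  show ?thesis unfolding newpart_def using qn le lt by auto
qed

lemma clo_sound:
  assumes np: "nonneg_prog \<Omega>" and hb: "(h, b) \<in> nn \<Omega>"
    and n1: "\<forall>l. h \<noteq> qatom (QNot l)" and n2: "\<forall>l. h \<noteq> FLit (lift l)" and n3: "h \<noteq> FBot"
    and V: "V \<subseteq> lift ` M \<union> newpart (prog_atoms (nn \<Omega>)) M X" and X: "orig Z = X"
    and body: "fsat V (freduct Z b)"
  shows "\<exists>q. h = qatom q \<and> Pos q \<in> newpart (prog_atoms (nn \<Omega>)) M X"
proof -
  let ?PA = "prog_atoms (nn \<Omega>)"
  have oV: "orig V \<subseteq> M" using V unfolding orig_def by auto
  have inV: "Pos q \<in> lift ` M \<union> newpart ?PA M X" if "Pos q \<in> V" for q using V that by blast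
  have red: "relem_red M X c" if "fsat V (freduct Z (elem_form c))" for c
    using that relem_red_mono[OF oV] X by (simp add: fsat_elem_red)
  have hPA: "form_atoms h \<subseteq> ?PA" using pa_rule[OF hb] by auto
  from np hb show ?thesis
  proof (cases rule: nn_cases)
    case (le0 w S)
    have "w \<le> ereal (rsum M X S)" using le0(2) rsum_nonneg[OF le0(1), of M X] by (cases w) auto
    then show ?thesis using hPA le0 by auto
  next
    case (le1 w S)
    then have Sne: "S \<noteq> []" by (auto simp: zero_ereal_def)
    have "w \<le> ereal (rsum M X (butlast S))" using le1 body inV by fastforce
    also have "\<dots> \<le> ereal (rsum M X S)" using rsum_butlast_le[OF Sne le1(1)] by simp
    finally show ?thesis using hPA le1 by auto
  next
    case (le2 w S)
    then have Sne: "S \<noteq> []" by (auto simp: zero_ereal_def)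
    have c: "relem_red M X (fst (last S))" using le2 body red by auto
    have "w - ereal (snd (last S)) \<le> ereal (rsum M X (butlast S))" using le2 body inV by fastforce
    then have "w \<le> ereal (rsum M X S)" using rsum_butlast[OF Sne, of M X] c by (simp add: ereal_minus_le)
    then show ?thesis using hPA le2 by auto
  next
    case (lt0 w S)
    have "w < ereal (rsum M X S)" using lt0(2) rsum_nonneg[OF lt0(1), of M X] by (cases w) auto
    then show ?thesis using hPA lt0 by auto
  next
    case (lt1 w S)
    then have Sne: "S \<noteq> []" by (auto simp: zero_ereal_def)
    have "w < ereal (rsum M X (butlast S))" using lt1 body inV by fastforce
    also have "\<dots> \<le> ereal (rsum M X S)" using rsum_butlast_le[OF Sne lt1(1)] by simp
    finally show ?thesis using hPA lt1 by auto
  next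
    case (lt2 w S)
    then have Sne: "S \<noteq> []" by (auto simp: zero_ereal_def)
    have c: "relem_red M X (fst (last S))" using lt2 body red by auto
    have "w - ereal (snd (last S)) < ereal (rsum M X (butlast S))" using lt2 body inV by fastforce
    then have "w < ereal (rsum M X S)" using rsum_butlast[OF Sne, of M X] c by (simp add: ereal_minus_less)
    then show ?thesis using hPA lt2 by auto
  qed (use n1 n2 n3 in auto)
qed

lemma qatom_ne2[simp]: "qatom q = FLit (lift l) \<longleftrightarrow> lift l = Pos q" "qatom q = qatom (QNot l) \<longleftrightarrow> q = QNot l"
  by (auto simp: qatom_def)

lemma V_mono:
  assumes np: "nonneg_prog \<Omega>" and M: "M \<subseteq> X"
  shows "lift ` M \<union> newpart (prog_atoms (nn \<Omega>)) M X \<subseteq> ext (prog_atoms (nn \<Omega>)) X"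
proof
  fix x assume x: "x \<in> lift ` M \<union> newpart (prog_atoms (nn \<Omega>)) M X"
  show "x \<in> ext (prog_atoms (nn \<Omega>)) X"
  proof (cases "x \<in> lift ` M")
    case True then show ?thesis using M unfolding ext_def by blast
  next
    case False
    then have "x \<in> newpart (prog_atoms (nn \<Omega>)) M X" using x by blast
    then obtain q where q: "x = Pos q" "q \<in> ({QNot l | l. QNot l \<in> prog_atoms (nn \<Omega>) \<and> l \<notin> X} \<union>
     {QLe w S | w S. QLe w S \<in> prog_atoms (nn \<Omega>) \<and> w \<le> ereal (rsum M X S)} \<union>
     {QLt w S | w S. QLt w S \<in> prog_atoms (nn \<Omega>) \<and> w < ereal (rsum M X S)})"
      unfolding newpart_def by blast
    have mono: "rsum M X S \<le> rsum X X S" if "QLe w S \<in> prog_atoms (nn \<Omega>) \<or> QLt w S \<in> prog_atoms (nn \<Omega>)" for w S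
    proof -
      have "nnok S" using that pa_good[OF np] by fastforce
      then show ?thesis using rsum_mono M by blast
    qed
    from q(2) consider (a) l where "q = QNot l" "QNot l \<in> prog_atoms (nn \<Omega>)" "l \<notin> X"
      | (b) w S where "q = QLe w S" "QLe w S \<in> prog_atoms (nn \<Omega>)" "w \<le> ereal (rsum M X S)"
      | (c) w S where "q = QLt w S" "QLt w S \<in> prog_atoms (nn \<Omega>)" "w < ereal (rsum M X S)"
      by blast
    then show ?thesis
    proof cases
      case a then show ?thesis using q(1) unfolding ext_def by simp
    next
      case b
      have "rsum M X S \<le> rsum X X S" using mono[of w S] b(2) by blast
      then have "ereal (rsum M X S) \<le> ereal (rsum X X S)" by simp
      then have "w \<le> ereal (rsum X X S)" using b(3) by (rule order_trans[rotated])
      then show ?thesis using q(1) b unfolding ext_def by simp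
    next
      case c
      have "rsum M X S \<le> rsum X X S" using mono[of w S] c(2) by blast
      then have "ereal (rsum M X S) \<le> ereal (rsum X X S)" by simp
      then have "w < ereal (rsum X X S)" by (rule less_le_trans[OF c(3)])
      then show ?thesis using q(1) c unfolding ext_def by simp
    qed
  qed
qed

lemma wprog_satD:
  "wprog_sat X \<Omega> \<Longrightarrow> ((L0, S0, U0), Cs) \<in> \<Omega> \<Longrightarrow> (\<forall>C\<in>set Cs. wc_sat X C) \<Longrightarrow> wc_sat X (L0, S0, U0)"
  unfolding wprog_sat_def by fastforce

lemma wreduct_iff:
  "(l, Bs) \<in> wreduct X \<Omega> \<longleftrightarrow> (\<exists>C0 Cs. Bs = map (lower_reduct X) Cs \<and> (C0, Cs) \<in> \<Omega> \<and>
     (\<forall>(L, S, U) \<in> set Cs. ereal (wsum X S) \<le> U) \<and> PosE l \<in> fst ` set (fst (snd C0)) \<and> l \<in> X)"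
  unfolding wreduct_def by blast

lemma dsat_iff: "dsat M R \<longleftrightarrow> (\<forall>(l, Bs) \<in> R.
      (\<forall>(L, S) \<in> set Bs. L \<le> ereal (fsum (\<lambda>l'. l' \<in> M) S)) \<longrightarrow> l \<in> M)"
  unfolding dsat_def fsum_def by simp

lemma lower_reduct_ok:
  assumes "L \<le> ereal (rsum M X S)"
  shows "fst (lower_reduct X (L, S, U)) \<le> ereal (fsum (\<lambda>l'. l' \<in> M) (snd (lower_reduct X (L, S, U))))"
  using assms unfolding rsum_split by (simp add: ereal_minus_le)

lemma lower_reduct_ok2:
  assumes "fst (lower_reduct X (L, S, U)) \<le> ereal (fsum (\<lambda>l'. l' \<in> M) (snd (lower_reduct X (L, S, U))))"
  shows "L \<le> ereal (rsum M X S)"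
  using assms unfolding rsum_split by (simp add: ereal_minus_le add.commute)

lemma lrule_body:
  "fsat V (freduct Z (conj_list (FNot (qatom (QNot l)) # map wc_nn Cs))) \<longleftrightarrow>
    Pos (QNot l) \<notin> Z \<and> (\<forall>(L, S, U) \<in> set Cs. Pos (QLe L S) \<in> V \<and> Pos (QLt U S) \<notin> Z)"
  by (auto simp: fsat_wc_nn_red)

lemma bot1_body:
  "fsat V (freduct Z (conj_list (FNot (qatom (QLe L0 S0)) # map wc_nn Cs))) \<longleftrightarrow>
    Pos (QLe L0 S0) \<notin> Z \<and> (\<forall>(L, S, U) \<in> set Cs. Pos (QLe L S) \<in> V \<and> Pos (QLt U S) \<notin> Z)"
  by (auto simp: fsat_wc_nn_red)

lemma bot2_body:
  "fsat V (freduct Z (conj_list (qatom (QLt U0 S0) # map wc_nn Cs))) \<longleftrightarrow>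
    Pos (QLt U0 S0) \<in> V \<and> (\<forall>(L, S, U) \<in> set Cs. Pos (QLe L S) \<in> V \<and> Pos (QLt U S) \<notin> Z)"
  by (auto simp: fsat_wc_nn_red)

lemma body_atoms:
  assumes "(h, conj_list (F # map wc_nn Cs)) \<in> \<Pi>" "(L, S, U) \<in> set Cs"
  shows "QLe L S \<in> prog_atoms \<Pi>" "QLt U S \<in> prog_atoms \<Pi>"
  using pa_rule[OF assms(1)] assms(2) by (force simp: form_atoms_conj_list form_atoms_wc_nn)+

lemma ext_mem:
  "Pos (QNot l) \<in> ext PA X \<longleftrightarrow> QNot l \<in> PA \<and> l \<notin> X"
  "Pos (QLe w S) \<in> ext PA X \<longleftrightarrow> QLe w S \<in> PA \<and> w \<le> ereal (wsum X S)"
  "Pos (QLt w S) \<in> ext PA X \<longleftrightarrow> QLt w S \<in> PA \<and> w < ereal (wsum X S)"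
  "lift l \<in> ext PA X \<longleftrightarrow> l \<in> X"
  unfolding ext_def by (simp_all only: QNot_in_V QLe_in_V QLt_in_V lift_in_V rsum_same)

lemma upper:
  assumes np: "nonneg_prog \<Omega>" and ZZ: "psat Z (preduct Z (nn \<Omega>))"
  shows "psat (Z \<inter> ext (prog_atoms (nn \<Omega>)) (orig Z)) (preduct Z (nn \<Omega>))"
  unfolding psat_preduct
proof (intro ballI impI, clarify)
  let ?PA = "prog_atoms (nn \<Omega>)" let ?X = "orig Z"
  let ?W = "Z \<inter> ext ?PA ?X"
  fix h b assume hb: "(h, b) \<in> nn \<Omega>" and bw: "fsat ?W (freduct Z b)"
  have bz: "fsat Z (freduct Z b)" using fsat_freduct_mono[OF bw] by blast
  have hz: "fsat Z (freduct Z h)" by (rule fires[OF ZZ hb bz])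
  have hPA: "form_atoms h \<subseteq> ?PA" using pa_rule[OF hb] by auto
  have CS: "\<exists>q. h = qatom q \<and> Pos q \<in> newpart ?PA ?X ?X"
    if "\<forall>l. h \<noteq> qatom (QNot l)" "\<forall>l. h \<noteq> FLit (lift l)" "h \<noteq> FBot"
    by (rule clo_sound[OF np hb that _ refl bw]) (auto simp: ext_def)
  from np hb show "fsat ?W (freduct Z h)"
  proof (cases rule: nn_cases)
    case (qnot l L0 S0 U0 Cs)
    then show ?thesis using hz bz hPA by (auto simp: ext_mem)
  next
    case (lrule l L0 S0 U0 Cs)
    then show ?thesis using hz by (auto simp: ext_mem)
  next
    case (bot1 L0 S0 U0 Cs) then show ?thesis using hz by simp
  next
    case (bot2 L0 S0 U0 Cs) then show ?thesis using hz by simp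
  qed (use CS hz in \<open>auto simp: ext_def\<close>)
qed

lemma build:
  assumes np: "nonneg_prog \<Omega>" and Z: "Z = ext (prog_atoms (nn \<Omega>)) X" and M: "M \<subseteq> X"
    and dM: "dsat M (wreduct X \<Omega>)" and ZZ: "psat Z (preduct Z (nn \<Omega>))"
  shows "psat (lift ` M \<union> newpart (prog_atoms (nn \<Omega>)) M X) (preduct Z (nn \<Omega>))"
  unfolding psat_preduct
proof (intro ballI impI, clarify)
  let ?PA = "prog_atoms (nn \<Omega>)"
  let ?V = "lift ` M \<union> newpart ?PA M X"
  have VZ: "?V \<subseteq> Z" using V_mono[OF np M] Z by simp
  have oZ: "orig Z = X" using Z by simp
  fix h b assume hb: "(h, b) \<in> nn \<Omega>" and bv: "fsat ?V (freduct Z b)"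
  have hPA: "form_atoms h \<union> form_atoms b \<subseteq> ?PA" using pa_rule[OF hb] by auto
  have CS: "\<exists>q. h = qatom q \<and> Pos q \<in> newpart ?PA M X"
    if "\<forall>l. h \<noteq> qatom (QNot l)" "\<forall>l. h \<noteq> FLit (lift l)" "h \<noteq> FBot"
    by (rule clo_sound[OF np hb that _ oZ bv]) simp
  from np hb show "fsat ?V (freduct Z h)"
  proof (cases rule: nn_cases)
    case (qnot l L0 S0 U0 Cs)
    then show ?thesis using bv hPA Z by (auto simp: ext_mem)
  next
    case (lrule l L0 S0 U0 Cs)
    have body: "Pos (QNot l) \<notin> Z" "\<forall>(L, S, U) \<in> set Cs. Pos (QLe L S) \<in> ?V \<and> Pos (QLt U S) \<notin> Z"
      using bv unfolding lrule lrule_body by auto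
    have "QNot l \<in> ?PA" using hPA lrule by auto
    then have lX: "l \<in> X" using body(1) Z by (auto simp: ext_mem)
    have up: "\<forall>(L, S, U) \<in> set Cs. ereal (wsum X S) \<le> U"
    proof (clarify)
      fix L S U assume C: "(L, S, U) \<in> set Cs"
      have "QLt U S \<in> ?PA" using body_atoms(2)[OF hb[unfolded lrule] C] .
      then show "ereal (wsum X S) \<le> U" using body(2) C Z by (auto simp: ext_mem not_less)
    qed
    have "(l, map (lower_reduct X) Cs) \<in> wreduct X \<Omega>"
      unfolding wreduct_iff using lrule(1,2) up lX by fastforce
    moreover have "\<forall>B \<in> set (map (lower_reduct X) Cs). fst B \<le> ereal (fsum (\<lambda>l'. l' \<in> M) (snd B))"
    proof
      fix B assume "B \<in> set (map (lower_reduct X) Cs)"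
      then obtain C where C: "C \<in> set Cs" "B = lower_reduct X C" by auto
      obtain L S U where Ceq: "C = (L, S, U)" by (cases C) auto
      have "L \<le> ereal (rsum M X S)" using body(2) C Ceq by auto
      then have "fst (lower_reduct X (L, S, U)) \<le> ereal (fsum (\<lambda>l'. l' \<in> M) (snd (lower_reduct X (L, S, U))))"
        by (rule lower_reduct_ok)
      then show "fst B \<le> ereal (fsum (\<lambda>l'. l' \<in> M) (snd B))" using C Ceq by simp
    qed
    then have "\<forall>(L', S') \<in> set (map (lower_reduct X) Cs). L' \<le> ereal (fsum (\<lambda>l'. l' \<in> M) S')"
      by (simp add: case_prod_unfold)
    ultimately have "l \<in> M" using dM unfolding dsat_iff by fastforce
    then show ?thesis using lrule by simp
  next
    case (bot1 L0 S0 U0 Cs)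
    have "fsat Z (freduct Z b)" using fsat_freduct_mono[OF bv VZ] .
    then show ?thesis using fires[OF ZZ hb] bot1 by simp
  next
    case (bot2 L0 S0 U0 Cs)
    have "fsat Z (freduct Z b)" using fsat_freduct_mono[OF bv VZ] .
    then show ?thesis using fires[OF ZZ hb] bot2 by simp
  qed (use CS in auto)
qed

lemma ext_model:
  assumes np: "nonneg_prog \<Omega>" and ws: "wprog_sat X \<Omega>"
  shows "psat (ext (prog_atoms (nn \<Omega>)) X) (preduct (ext (prog_atoms (nn \<Omega>)) X) (nn \<Omega>))"
  unfolding psat_preduct
proof (intro ballI impI, clarify)
  let ?PA = "prog_atoms (nn \<Omega>)"
  let ?Z = "ext ?PA X"
  fix h b assume hb: "(h, b) \<in> nn \<Omega>" and bz: "fsat ?Z (freduct ?Z b)"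
  have hPA: "form_atoms h \<union> form_atoms b \<subseteq> ?PA" using pa_rule[OF hb] by auto
  have CS: "\<exists>q. h = qatom q \<and> Pos q \<in> newpart ?PA X X"
    if "\<forall>l. h \<noteq> qatom (QNot l)" "\<forall>l. h \<noteq> FLit (lift l)" "h \<noteq> FBot"
    by (rule clo_sound[OF np hb that _ _ bz]) (auto simp: ext_def)
  have wcs: "\<forall>C\<in>set Cs. wc_sat X C"
    if body: "\<forall>(L, S, U) \<in> set Cs. Pos (QLe L S) \<in> ?Z \<and> Pos (QLt U S) \<notin> ?Z"
      and r: "(h', conj_list (F # map wc_nn Cs)) \<in> nn \<Omega>" for Cs F h'
  proof
    fix C assume C: "C \<in> set Cs"
    obtain L S U where Ceq: "C = (L, S, U)" by (cases C) auto
    have "QLt U S \<in> ?PA" using body_atoms(2)[OF r C[unfolded Ceq]] .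
    then show "wc_sat X C" using body C unfolding Ceq by (auto simp: ext_mem not_less)
  qed
  from np hb show "fsat ?Z (freduct ?Z h)"
  proof (cases rule: nn_cases)
    case (qnot l L0 S0 U0 Cs)
    then show ?thesis using bz hPA by (auto simp: ext_mem)
  next
    case (lrule l L0 S0 U0 Cs)
    have "QNot l \<in> ?PA" using hPA lrule by auto
    then show ?thesis using bz lrule by (auto simp: ext_mem split: if_splits)
  next
    case (bot1 L0 S0 U0 Cs)
    have body: "Pos (QLe L0 S0) \<notin> ?Z" "\<forall>(L, S, U) \<in> set Cs. Pos (QLe L S) \<in> ?Z \<and> Pos (QLt U S) \<notin> ?Z"
      using bz unfolding bot1 bot1_body by auto
    have "wc_sat X (L0, S0, U0)" using wprog_satD[OF ws bot1(1) wcs[OF body(2) hb[unfolded bot1]]] .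
    moreover have "QLe L0 S0 \<in> ?PA" using hPA bot1 by auto
    ultimately show ?thesis using body(1) by (simp add: ext_mem)
  next
    case (bot2 L0 S0 U0 Cs)
    have body: "Pos (QLt U0 S0) \<in> ?Z" "\<forall>(L, S, U) \<in> set Cs. Pos (QLe L S) \<in> ?Z \<and> Pos (QLt U S) \<notin> ?Z"
      using bz unfolding bot2 bot2_body by auto
    have "wc_sat X (L0, S0, U0)" using wprog_satD[OF ws bot2(1) wcs[OF body(2) hb[unfolded bot2]]] .
    then have w: "ereal (wsum X S0) \<le> U0" by simp
    have "U0 < ereal (wsum X S0)" using body(1) by (simp add: ext_mem)
    then show ?thesis using w leD by blast
  qed (use CS in \<open>auto simp: ext_def\<close>)
qed

lemma reduct_dsat:
  assumes np: "nonneg_prog \<Omega>" and Z: "Z = ext (prog_atoms (nn \<Omega>)) X"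
    and Y: "psat Y (preduct Z (nn \<Omega>))"
  shows "dsat (orig Y) (wreduct X \<Omega>)"
  unfolding dsat_iff
proof (clarify)
  let ?PA = "prog_atoms (nn \<Omega>)" let ?M = "orig Y"
  fix l Bs
  assume lB: "(l, Bs) \<in> wreduct X \<Omega>"
    and body: "\<forall>(L, S) \<in> set Bs. L \<le> ereal (fsum (\<lambda>l'. l' \<in> ?M) S)"
  obtain C0 Cs where Bs: "Bs = map (lower_reduct X) Cs" and r: "(C0, Cs) \<in> \<Omega>"
    and up: "\<forall>(L, S, U) \<in> set Cs. ereal (wsum X S) \<le> U"
    and hd: "PosE l \<in> fst ` set (fst (snd C0))" and lX: "l \<in> X"
    using lB unfolding wreduct_iff by blast
  obtain L0 S0 U0 where C0: "C0 = (L0, S0, U0)" by (cases C0) auto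
  have rule: "(FLit (lift l), conj_list (FNot (qatom (QNot l)) # map wc_nn Cs)) \<in> nn \<Omega>"
    using nn_base[OF r] hd unfolding C0 by auto
  have low: "newpart ?PA ?M X \<subseteq> Y" using lower[OF np Y] Z by simp
  have "fsat Y (freduct Z (conj_list (FNot (qatom (QNot l)) # map wc_nn Cs)))"
    unfolding lrule_body
  proof (intro conjI ballI)
    show "Pos (QNot l) \<notin> Z" using lX Z by (simp add: ext_mem)
  next
    fix C assume C: "C \<in> set Cs"
    obtain L S U where Ceq: "C = (L, S, U)" by (cases C) auto
    have "lower_reduct X (L, S, U) \<in> set Bs" unfolding Bs set_map using C Ceq by (intro imageI) simp
    from bspec[OF body this]
    have "case lower_reduct X (L, S, U) of (L', S') \<Rightarrow> L' \<le> ereal (fsum (\<lambda>l'. l' \<in> ?M) S')" .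
    then have "fst (lower_reduct X (L, S, U)) \<le> ereal (fsum (\<lambda>l'. l' \<in> ?M) (snd (lower_reduct X (L, S, U))))"
      by (simp only: case_prod_unfold)
    then have "L \<le> ereal (rsum ?M X S)" by (rule lower_reduct_ok2)
    moreover have "QLe L S \<in> ?PA" using body_atoms(1)[OF rule C[unfolded Ceq]] .
    ultimately have "Pos (QLe L S) \<in> Y" using low by auto
    moreover have "Pos (QLt U S) \<notin> Z" using up C Ceq Z by (auto simp: ext_mem not_less)
    ultimately show "case C of (L, S, U) \<Rightarrow> Pos (QLe L S) \<in> Y \<and> Pos (QLt U S) \<notin> Z" using Ceq by simp
  qed
  from fires[OF Y rule this] show "l \<in> ?M" by simp
qed

lemma wreduct_nnok:
  assumes np: "nonneg_prog \<Omega>" and lB: "(l, Bs) \<in> wreduct X \<Omega>" and LS: "(L, S) \<in> set Bs"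
  shows "nnok S"
proof -
  obtain C0 Cs where Bs: "Bs = map (lower_reduct X) Cs" and r: "(C0, Cs) \<in> \<Omega>"
    using lB unfolding wreduct_iff by blast
  obtain C where C: "C \<in> set Cs" "(L, S) = lower_reduct X C" using LS Bs by auto
  obtain L1 S1 U1 where Ceq: "C = (L1, S1, U1)" by (cases C) auto
  have "nnok S1" using nonneg_progD[OF np r, of C] C Ceq by simp
  then show ?thesis using C Ceq nnok_pos by simp
qed

lemma cl_lower: "dsat X R \<Longrightarrow> cl R \<subseteq> X"
  unfolding cl_def by blast

lemma cl_model:
  assumes np: "nonneg_prog \<Omega>"
  shows "dsat (cl (wreduct X \<Omega>)) (wreduct X \<Omega>)"
  unfolding dsat_iff
proof (clarify)
  let ?R = "wreduct X \<Omega>"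
  fix l Bs assume lB: "(l, Bs) \<in> ?R"
    and body: "\<forall>(L, S) \<in> set Bs. L \<le> ereal (fsum (\<lambda>l'. l' \<in> cl ?R) S)"
  show "l \<in> cl ?R" unfolding cl_def
  proof (rule InterI)
    fix X' assume "X' \<in> {X'. dsat X' ?R}"
    then have d: "dsat X' ?R" by simp
    then have sub: "cl ?R \<subseteq> X'" by (rule cl_lower)
    have "\<forall>(L, S) \<in> set Bs. L \<le> ereal (fsum (\<lambda>l'. l' \<in> X') S)"
    proof (clarify)
      fix L S assume LS: "(L, S) \<in> set Bs"
      have "fsum (\<lambda>l'. l' \<in> cl ?R) S \<le> fsum (\<lambda>l'. l' \<in> X') S"
        by (rule fsum_mono[OF wreduct_nnok[OF np lB LS]]) (use sub in blast)
      then have "ereal (fsum (\<lambda>l'. l' \<in> cl ?R) S) \<le> ereal (fsum (\<lambda>l'. l' \<in> X') S)" by simp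
      moreover have "L \<le> ereal (fsum (\<lambda>l'. l' \<in> cl ?R) S)" using body LS by blast
      ultimately show "L \<le> ereal (fsum (\<lambda>l'. l' \<in> X') S)" by (rule order_trans[rotated])
    qed
    then show "l \<in> X'" using d lB unfolding dsat_iff by blast
  qed
qed

lemma consistent_orig: "consistent (orig Z)" if "consistent Z"
proof (unfold consistent_def, intro allI notI)
  fix a assume "Pos a \<in> orig Z \<and> Neg a \<in> orig Z"
  then have "Pos (Orig a) \<in> Z \<and> Neg (Orig a) \<in> Z" by (simp add: orig_def)
  with that show False unfolding consistent_def by blast
qed

lemma consistent_ext: "consistent (ext PA X)" if cX: "consistent X"
proof (unfold consistent_def, intro allI notI)
  fix a assume H: "Pos a \<in> ext PA X \<and> Neg a \<in> ext PA X"
  have "Neg a \<notin> newpart PA X X" unfolding newpart_def by auto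
  then obtain l where l: "l \<in> X" "Neg a = lift l" using H unfolding ext_def by auto
  then obtain b where b: "l = Neg b" "a = Orig b" by (cases l) auto
  have "Pos a \<notin> newpart PA X X" using newpart_new b(2) by fastforce
  then have "Pos a \<in> lift ` X" using H unfolding ext_def by auto
  then obtain x where x: "x \<in> X" "Pos a = lift x" by auto
  then have "lift x = lift (Pos b)" using b by simp
  then have "x = Pos b" by (simp only: lift_eq_iff)
  then have "Pos b \<in> X" using x by simp
  with cX l b show False unfolding consistent_def by blast
qed

lemma D1:
  assumes np: "nonneg_prog \<Omega>" and A: "nested_answer_set (nn \<Omega>) Z"
  shows "Z = ext (prog_atoms (nn \<Omega>)) (orig Z) \<and> wc_answer_set \<Omega> (orig Z)"
proof -
  let ?PA = "prog_atoms (nn \<Omega>)"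
  define X where "X = orig Z"
  have cZ: "consistent Z" and ZZ: "psat Z (preduct Z (nn \<Omega>))"
    and mn: "\<And>Y. consistent Y \<Longrightarrow> Y \<subseteq> Z \<Longrightarrow> psat Y (preduct Z (nn \<Omega>)) \<Longrightarrow> Y = Z"
    using A unfolding nested_answer_set_def min_answer_set_def by blast+
  have "Z \<inter> ext ?PA X = Z"
    using mn[OF consistent_subset[OF cZ] _ upper[OF np ZZ]] unfolding X_def by blast
  then have "Z \<subseteq> ext ?PA X" by blast
  moreover have "ext ?PA X \<subseteq> Z"
    using lower[OF np ZZ] unfolding ext_def X_def by (auto simp: orig_def)
  ultimately have Zeq: "Z = ext ?PA X" by blast
  have ws: "wprog_sat X \<Omega>"
    unfolding wprog_sat_def
  proof (clarify)
    fix C0 Cs assume r: "(C0, Cs) \<in> \<Omega>" and all: "\<forall>C\<in>set Cs. wc_sat X C"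
    obtain L0 S0 U0 where C0: "C0 = (L0, S0, U0)" by (cases C0) auto
    have r1: "(FBot, conj_list (FNot (qatom (QLe L0 S0)) # map wc_nn Cs)) \<in> nn \<Omega>"
      and r2: "(FBot, conj_list (qatom (QLt U0 S0) # map wc_nn Cs)) \<in> nn \<Omega>"
      using nn_base[OF r] unfolding C0 by auto
    have cs: "\<forall>(L, S, U) \<in> set Cs. Pos (QLe L S) \<in> Z \<and> Pos (QLt U S) \<notin> Z"
    proof (clarify)
      fix L S U assume C: "(L, S, U) \<in> set Cs"
      have "QLe L S \<in> ?PA" "QLt U S \<in> ?PA" using body_atoms[OF r1 C] by auto
      moreover have "wc_sat X (L, S, U)" using all C by blast
      ultimately show "Pos (QLe L S) \<in> Z \<and> Pos (QLt U S) \<notin> Z"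
        unfolding Zeq by (auto simp: ext_mem not_less)
    qed
    have "Pos (QLe L0 S0) \<in> Z"
    proof (rule ccontr)
      assume "Pos (QLe L0 S0) \<notin> Z"
      then have "fsat Z (freduct Z (conj_list (FNot (qatom (QLe L0 S0)) # map wc_nn Cs)))"
        unfolding bot1_body using cs by blast
      from fires[OF ZZ r1 this] show False by simp
    qed
    moreover have "Pos (QLt U0 S0) \<notin> Z"
    proof
      assume "Pos (QLt U0 S0) \<in> Z"
      then have "fsat Z (freduct Z (conj_list (qatom (QLt U0 S0) # map wc_nn Cs)))"
        unfolding bot2_body using cs by blast
      from fires[OF ZZ r2 this] show False by simp
    qed
    moreover have "QLt U0 S0 \<in> ?PA" using pa_rule[OF r2] by auto
    ultimately show "wc_sat X C0" unfolding C0 Zeq by (auto simp: ext_mem not_less)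
  qed
  have dX: "dsat X (wreduct X \<Omega>)"
    unfolding dsat_iff using wreduct_iff by fastforce
  let ?M = "cl (wreduct X \<Omega>)"
  have M: "?M \<subseteq> X" by (rule cl_lower[OF dX])
  have dM: "dsat ?M (wreduct X \<Omega>)" by (rule cl_model[OF np])
  let ?V = "lift ` ?M \<union> newpart ?PA ?M X"
  have VZ: "?V \<subseteq> Z" using V_mono[OF np M] Zeq by simp
  have "psat ?V (preduct Z (nn \<Omega>))" by (rule build[OF np Zeq M dM ZZ])
  then have "?V = Z" using mn[OF consistent_subset[OF cZ VZ] VZ] by blast
  then have "orig ?V = orig Z" by simp
  then have "?M = X" unfolding X_def by simp
  then have "wc_answer_set \<Omega> X" using ws consistent_orig[OF cZ] unfolding wc_answer_set_def X_def by blast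
  then show ?thesis using Zeq unfolding X_def by blast
qed

lemma D2:
  assumes np: "nonneg_prog \<Omega>" and A: "wc_answer_set \<Omega> X"
  shows "nested_answer_set (nn \<Omega>) (ext (prog_atoms (nn \<Omega>)) X)"
proof -
  let ?PA = "prog_atoms (nn \<Omega>)" let ?Z = "ext ?PA X"
  have cX: "consistent X" and ws: "wprog_sat X \<Omega>" and clX: "cl (wreduct X \<Omega>) = X"
    using A unfolding wc_answer_set_def by blast+
  have "\<forall>Y. consistent Y \<and> Y \<subseteq> ?Z \<and> psat Y (preduct ?Z (nn \<Omega>)) \<longrightarrow> Y = ?Z"
  proof (intro allI impI, elim conjE)
    fix Y assume cY: "consistent Y" and YZ: "Y \<subseteq> ?Z" and Yp: "psat Y (preduct ?Z (nn \<Omega>))"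
    have "dsat (orig Y) (wreduct X \<Omega>)" using reduct_dsat[of \<Omega> "?Z" X Y] np Yp by blast
    then have "X \<subseteq> orig Y" using cl_lower clX by blast
    moreover have "orig Y \<subseteq> X" using YZ unfolding orig_def by (auto simp: ext_mem)
    ultimately have oY: "orig Y = X" by blast
    have "newpart ?PA (orig Y) (orig ?Z) \<subseteq> Y" by (rule lower[OF np Yp])
    then have "newpart ?PA X X \<subseteq> Y" using oY by simp
    moreover have "lift ` X \<subseteq> Y" using oY unfolding orig_def by auto
    ultimately have "?Z \<subseteq> Y" unfolding ext_def by blast
    then show "Y = ?Z" using YZ by blast
  qed
  then show ?thesis
    unfolding nested_answer_set_def min_answer_set_def
    using consistent_ext[OF cX] ext_model[OF np ws] by blast
qed

lemma ext_minus: "ext (prog_atoms (nn \<Omega>)) X - Pos ` new_atoms \<Omega> = lift ` X"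
proof -
  have "newpart (prog_atoms (nn \<Omega>)) X X \<subseteq> Pos ` new_atoms \<Omega>"
    using newpart_new unfolding new_atoms_def by blast
  moreover have "lift ` X \<inter> Pos ` new_atoms \<Omega> = {}"
    unfolding new_atoms_def by auto
  ultimately show ?thesis unfolding ext_def by blast
qed

theorem theorem2:
  fixes \<Omega> :: "'a wrule set"
  assumes "\<forall>(C0, Cs) \<in> \<Omega>. \<forall>(L, S, U) \<in> set (C0 # Cs). \<forall>(c, w) \<in> set S. 0 \<le> w"
  shows "bij_betw (\<lambda>Z. Z - Pos ` new_atoms \<Omega>)
           {Z. nested_answer_set (nn \<Omega>) Z}
           ((\<lambda>X. lift ` X) ` {X. wc_answer_set \<Omega> X})"
proof -
  have np: "nonneg_prog \<Omega>" using assms unfolding nonneg_prog_def .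
  let ?PA = "prog_atoms (nn \<Omega>)"
  let ?f = "\<lambda>Z. Z - Pos ` new_atoms \<Omega>"
  have fZ: "?f Z = lift ` orig Z" "Z = ext ?PA (orig Z)" "wc_answer_set \<Omega> (orig Z)"
    if "nested_answer_set (nn \<Omega>) Z" for Z
    using D1[OF np that] ext_minus[of \<Omega> "orig Z"] by auto
  show ?thesis
  proof (rule bij_betw_imageI)
    show "inj_on ?f {Z. nested_answer_set (nn \<Omega>) Z}"
    proof (rule inj_onI)
      fix Z1 Z2 assume 1: "Z1 \<in> {Z. nested_answer_set (nn \<Omega>) Z}" and 2: "Z2 \<in> {Z. nested_answer_set (nn \<Omega>) Z}"
        and eq: "?f Z1 = ?f Z2"
      then have "lift ` orig Z1 = lift ` orig Z2" using fZ(1) by simp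
      then have "orig Z1 = orig Z2" using inj_image_eq_iff[OF inj_lift] by blast
      then show "Z1 = Z2" using fZ(2) 1 2 by (metis mem_Collect_eq)
    qed
  next
    show "?f ` {Z. nested_answer_set (nn \<Omega>) Z} = (\<lambda>X. lift ` X) ` {X. wc_answer_set \<Omega> X}"
    proof
      show "?f ` {Z. nested_answer_set (nn \<Omega>) Z} \<subseteq> (\<lambda>X. lift ` X) ` {X. wc_answer_set \<Omega> X}"
        using fZ by blast
    next
      show "(\<lambda>X. lift ` X) ` {X. wc_answer_set \<Omega> X} \<subseteq> ?f ` {Z. nested_answer_set (nn \<Omega>) Z}"
      proof
        fix Y assume "Y \<in> (\<lambda>X. lift ` X) ` {X. wc_answer_set \<Omega> X}"
        then obtain X where X: "wc_answer_set \<Omega> X" "Y = lift ` X" by blast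
        have "nested_answer_set (nn \<Omega>) (ext ?PA X)" by (rule D2[OF np X(1)])
        moreover have "?f (ext ?PA X) = Y" using ext_minus X(2) by simp
        ultimately show "Y \<in> ?f ` {Z. nested_answer_set (nn \<Omega>) Z}" by blast
      qed
    qed
  qed
qed
end
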